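(* In the wake-up algorithm with advice described in the context, let $B_0$ be the set of nodes $v$ with advice bit $g_v=0$. Then the message complexity during all phases in which some $v\in B_0$ is the actor is $O\left(\sqrt{\frac{n^3}{2^\beta}}\log n\right)$ with high probability, where $\beta=\max\{\lfloor(\alpha-1)/2\rfloor,0\}$.
   Context: Model: connected graph on $n$ nodes, unique IDs in $[n]$, synchronous port numbering $\mathsf{CONGEST}$ model with quantum routing (classical link plus quantum channel per edge; sleeping nodes wake only on classical messages, and a quantum message to a sleeping node causes a $-1$ phase reflection, awake nodes reflect $+1$). Message complexity counts classical messages plus, per round, the maximum number of quantum messages over all computational-basis configurations of the global state. Each node gets at most $\alpha$ advice bits from an oracle that knows everything including the initially awake set $A_1$. Sets: $A_0=\emptyset$, $S_i=(\bigcup_{u\in A_i}N_u)\setminus(A_i\cup A_{i-1})$, $A_{i+1}=S_i$; listing $A_i$ as $v_1^{(i)},\dots$ by increasing ID, $S^{(i)}_{v_j^{(i)}}=N_{v_j^{(i)}}\cap(S_i\setminus\bigcup_{k<j}S^{(i)}_{v_k^{(i)}})$; $v$ is an actor of epoch $i$ iff $v\in A_i$. Advice (for $\alpha\ge3$; no advice if $\alpha\le2$): advice tree $\mathcal T_v$ — complete binary tree of depth $\log_2 n_v'$ ($n_v'$ smallest power of 2 $\ge\deg(v)$) with leaves labeled $1,\dots,\deg(v)$ left to right and remaining rightmost leaves labeled $\deg(v)$; a bit string gives a root path and its associated port range is the interval between smallest and largest leaf labels below the path's endpoint; $P_v^\beta(w)$ is the range of the length-$\beta$ string whose range contains $v$'s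 port to $w$. For actor $v$ of epoch $i$: $g_v=1$ iff $|S_v^{(i)}|\ge2^\beta$; $\Lambda_v$ empty if $g_v=1$ or $S_v^{(i)}=\emptyset$, else encodes $P_v^\beta(w_1)$, $w_1$ the smallest-ID node in $S_v^{(i)}$; with $S_1'=S_v^{(i)}$ and $S_j'$ obtained from $S_{j-1}'$ by removing nodes reached by $v$ via ports in $P_v^\beta(w_{j-1})$, $w_j$ the smallest-ID node of $S_j'$, the proxy advice $\Pi_{w_{j-1}}$ stored at $w_{j-1}$ encodes $P_v^\beta(w_j)$ (empty if $S_j'=\emptyset$). Algorithm: epochs of $n$ phases, each phase $Cn\log n$ rounds; initially awake nodes are actors in epoch 1; a node woken during epoch $i$ is an actor in epoch $i+1$, only once, in the phase equal to its ID. Actor $v$: if $g_v=1$ or $\alpha\le2$, it runs $\mathsf{IteratedQuantumSearch}$ (which w.h.p. finds all ports $p$ in a given range $X$ with $f(p)=1$, using $O(\sqrt{|X|\max\{C,1\}}\log n)$ rounds and messages, $C=|f^{-1}(1)|$) over all its ports with $f(p)=1$ iff the neighbor on port $p$ is asleep, waking each found neighbor by a classical message; if $g_v=0$ and $\Lambda_v$ is empty, it does nothing; otherwise it runs $\mathsf{IteratedQuantumSearch}$ on the range of $\Lambda_v$, waking sleeping neighbors there; a woken neighbor $w$ with proxy advice $\Pi_w$ sends it to $v$, and $v$ repeats on the range of the received proxy advice until no new proxy advice arrives. "With high probability": probability at least $1-1/n^c$.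
   Formalization: The bound on the message complexity of the phases whose actor lies in $B_0$ is claimed only for advice sizes $\alpha$ with $2^\beta$ at most n. The paper assumes this as well. *)

theory Defs
  imports "HOL-Probability.Probability"
begin

text \<open>Nodes are identified with their IDs 1..n. adj is the (symmetric, irreflexive)
 edge relation; port v p is the neighbour of v reached through port p, for p in 1..deg v.\<close>

definition nbrs :: "(nat \<Rightarrow> nat \<Rightarrow> bool) \<Rightarrow> nat \<Rightarrow> nat set" where
  "nbrs adj v = {u. adj v u}"

definition deg :: "(nat \<Rightarrow> nat \<Rightarrow> bool) \<Rightarrow> nat \<Rightarrow> nat" where
  "deg adj v = card (nbrs adj v)"

definition portnum :: "(nat \<Rightarrow> nat \<Rightarrow> bool) \<Rightarrow> (nat \<Rightarrow> nat \<Rightarrow> nat) \<Rightarrow> nat \<Rightarrow> nat \<Rightarrow> nat" where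
  "portnum adj port v w = inv_into {1..deg adj v} (port v) w"

definition wakeup_instance ::
  "nat \<Rightarrow> (nat \<Rightarrow> nat \<Rightarrow> bool) \<Rightarrow> (nat \<Rightarrow> nat \<Rightarrow> nat) \<Rightarrow> nat set \<Rightarrow> bool" where
  "wakeup_instance n adj port A1 \<longleftrightarrow>
     1 \<le> n
   \<and> (\<forall>u v. adj u v \<longrightarrow> u \<in> {1..n} \<and> v \<in> {1..n} \<and> u \<noteq> v \<and> adj v u)
   \<and> (\<forall>u\<in>{1..n}. \<forall>v\<in>{1..n}. adj\<^sup>*\<^sup>* u v)
   \<and> (\<forall>v\<in>{1..n}. bij_betw (port v) {1..deg adj v} (nbrs adj v))
   \<and> A1 \<subseteq> {1..n} \<and> A1 \<noteq> {}"

fun Aset :: "(nat \<Rightarrow> nat \<Rightarrow> bool) \<Rightarrow> nat set \<Rightarrow> nat \<Rightarrow> nat set" where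
  "Aset adj A1 0 = {}"
| "Aset adj A1 (Suc 0) = A1"
| "Aset adj A1 (Suc (Suc i)) =
     (\<Union>u\<in>Aset adj A1 (Suc i). nbrs adj u) - (Aset adj A1 (Suc i) \<union> Aset adj A1 i)"

definition Sset :: "(nat \<Rightarrow> nat \<Rightarrow> bool) \<Rightarrow> nat set \<Rightarrow> nat \<Rightarrow> nat set" where
  "Sset adj A1 i = (\<Union>u\<in>Aset adj A1 i. nbrs adj u) - (Aset adj A1 i \<union> Aset adj A1 (i - 1))"

text \<open>Scum adj A1 i k = union of S_u^(i) over actors u of epoch i with ID u < k.\<close>
fun Scum :: "(nat \<Rightarrow> nat \<Rightarrow> bool) \<Rightarrow> nat set \<Rightarrow> nat \<Rightarrow> nat \<Rightarrow> nat set" where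
  "Scum adj A1 i 0 = {}"
| "Scum adj A1 i (Suc k) = Scum adj A1 i k \<union>
     (if k \<in> Aset adj A1 i then nbrs adj k \<inter> (Sset adj A1 i - Scum adj A1 i k) else {})"

definition Sv :: "(nat \<Rightarrow> nat \<Rightarrow> bool) \<Rightarrow> nat set \<Rightarrow> nat \<Rightarrow> nat \<Rightarrow> nat set" where
  "Sv adj A1 i v = nbrs adj v \<inter> (Sset adj A1 i - Scum adj A1 i v)"

definition epoch_of :: "(nat \<Rightarrow> nat \<Rightarrow> bool) \<Rightarrow> nat set \<Rightarrow> nat \<Rightarrow> nat" where
  "epoch_of adj A1 v = (LEAST i. 1 \<le> i \<and> v \<in> Aset adj A1 i)"

definition Sadv :: "(nat \<Rightarrow> nat \<Rightarrow> bool) \<Rightarrow> nat set \<Rightarrow> nat \<Rightarrow> nat set" where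
  "Sadv adj A1 v = Sv adj A1 (epoch_of adj A1 v) v"

definition beta :: "nat \<Rightarrow> nat" where
  "beta \<alpha> = nat (max \<lfloor>(real \<alpha> - 1) / 2\<rfloor> 0)"

definition gbit :: "(nat \<Rightarrow> nat \<Rightarrow> bool) \<Rightarrow> nat set \<Rightarrow> nat \<Rightarrow> nat \<Rightarrow> bool" where
  "gbit adj A1 \<alpha> v \<longleftrightarrow> 2 ^ beta \<alpha> \<le> card (Sadv adj A1 v)"

text \<open>B_0: nodes holding advice bit g_v = 0 (advice exists only for alpha >= 3).\<close>
definition B0 :: "nat \<Rightarrow> (nat \<Rightarrow> nat \<Rightarrow> bool) \<Rightarrow> nat set \<Rightarrow> nat \<Rightarrow> nat set" where
  "B0 n adj A1 \<alpha> = {v \<in> {1..n}. 3 \<le> \<alpha> \<and> \<not> gbit adj A1 \<alpha> v}"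

text \<open>Advice tree: depth D = log2 of the smallest power of two >= d; leaf k (0-based,
 left to right) is labelled min (k+1) d.  A bit string of length l selects a block of
 2^(D-l) consecutive leaves; its port range is between the smallest and largest label.
 Strings longer than the depth are truncated to the depth (l = min beta D).\<close>
definition tree_depth :: "nat \<Rightarrow> nat" where
  "tree_depth d = (LEAST k. d \<le> 2 ^ k)"

definition leaf_label :: "nat \<Rightarrow> nat \<Rightarrow> nat" where
  "leaf_label d k = min (k + 1) d"

definition prange :: "nat \<Rightarrow> nat \<Rightarrow> nat \<Rightarrow> nat set" where
  "prange d \<beta> p =
     (let D = tree_depth d; l = min \<beta> D; blk = 2 ^ (D - l); b = (p - 1) div blk
      in {leaf_label d (b * blk) .. leaf_label d (b * blk + blk - 1)})"

definition Prange :: "(nat \<Rightarrow> nat \<Rightarrow> bool) \<Rightarrow> (nat \<Rightarrow> nat \<Rightarrow> nat) \<Rightarrow> nat \<Rightarrow> nat \<Rightarrow> nat \<Rightarrow> nat set" where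
  "Prange adj port \<beta> v w = prange (deg adj v) \<beta> (portnum adj port v w)"

fun chainS :: "(nat \<Rightarrow> nat \<Rightarrow> bool) \<Rightarrow> (nat \<Rightarrow> nat \<Rightarrow> nat) \<Rightarrow> nat set \<Rightarrow> nat \<Rightarrow> nat \<Rightarrow> nat \<Rightarrow> nat set" where
  "chainS adj port A1 \<alpha> v 0 = Sadv adj A1 v"
| "chainS adj port A1 \<alpha> v (Suc j) =
     (let S = chainS adj port A1 \<alpha> v j in
      if S = {} then {}
      else S - {u \<in> S. portnum adj port v u \<in> Prange adj port (beta \<alpha>) v (Min S)})"

definition Lambda :: "(nat \<Rightarrow> nat \<Rightarrow> bool) \<Rightarrow> (nat \<Rightarrow> nat \<Rightarrow> nat) \<Rightarrow> nat set \<Rightarrow> nat \<Rightarrow> nat \<Rightarrow> nat set option" where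
  "Lambda adj port A1 \<alpha> v =
     (if 3 \<le> \<alpha> \<and> \<not> gbit adj A1 \<alpha> v \<and> Sadv adj A1 v \<noteq> {}
      then Some (Prange adj port (beta \<alpha>) v (Min (Sadv adj A1 v))) else None)"

definition proxy_cond :: "nat \<Rightarrow> (nat \<Rightarrow> nat \<Rightarrow> bool) \<Rightarrow> (nat \<Rightarrow> nat \<Rightarrow> nat) \<Rightarrow> nat set \<Rightarrow> nat \<Rightarrow> nat \<Rightarrow> nat \<times> nat \<Rightarrow> bool" where
  "proxy_cond n adj port A1 \<alpha> w vj \<longleftrightarrow>
     (let v = fst vj; j = snd vj in
        v \<in> B0 n adj A1 \<alpha> \<and> chainS adj port A1 \<alpha> v j \<noteq> {}
      \<and> w = Min (chainS adj port A1 \<alpha> v j) \<and> chainS adj port A1 \<alpha> v (Suc j) \<noteq> {})"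

text \<open>Proxy advice Pi_w (None = empty).\<close>
definition Pi_adv :: "nat \<Rightarrow> (nat \<Rightarrow> nat \<Rightarrow> bool) \<Rightarrow> (nat \<Rightarrow> nat \<Rightarrow> nat) \<Rightarrow> nat set \<Rightarrow> nat \<Rightarrow> nat \<Rightarrow> nat set option" where
  "Pi_adv n adj port A1 \<alpha> w =
     (if \<exists>vj. proxy_cond n adj port A1 \<alpha> w vj
      then (let vj = (SOME vj. proxy_cond n adj port A1 \<alpha> w vj); v = fst vj; j = snd vj in
            Some (Prange adj port (beta \<alpha>) v (Min (chainS adj port A1 \<alpha> v (Suc j)))))
      else None)"

text \<open>Q n X T: distribution of (set of ports reported, number of messages used) of
 IteratedQuantumSearch on port range X when T is the set of ports in X with f = 1.\<close>
type_synonym qsearch = "nat \<Rightarrow> nat set \<Rightarrow> nat set \<Rightarrow> (nat set \<times> nat) pmf"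

definition qsearch_spec :: "qsearch \<Rightarrow> real \<Rightarrow> real \<Rightarrow> bool" where
  "qsearch_spec Q K0 d \<longleftrightarrow>
     (\<forall>n X T. finite X \<longrightarrow> T \<subseteq> X \<longrightarrow>
        measure_pmf.prob (Q n X T)
          {(F, m). F = T \<and> real m \<le> K0 * sqrt (real (card X) * real (max (card T) 1)) * ln (real n)}
        \<ge> 1 - 1 / real n powr d)"

text \<open>Loop of a B0-actor v: search a range, wake the found sleeping neighbours with one
 classical message each; each woken node with proxy advice sends it to v (one message);
 repeat on received ranges.  State: (awake set, messages of this phase).\<close>
fun b0loop :: "qsearch \<Rightarrow> nat \<Rightarrow> (nat \<Rightarrow> nat \<Rightarrow> bool) \<Rightarrow> (nat \<Rightarrow> nat \<Rightarrow> nat) \<Rightarrow>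
    (nat \<Rightarrow> nat set option) \<Rightarrow> nat \<Rightarrow> nat \<Rightarrow> nat set list \<Rightarrow> nat set \<times> nat \<Rightarrow> (nat set \<times> nat) pmf" where
  "b0loop Q n adj port Px v 0 rs st = return_pmf st"
| "b0loop Q n adj port Px v (Suc k) [] st = return_pmf st"
| "b0loop Q n adj port Px v (Suc k) (R # rs) st =
     bind_pmf (Q n R {p \<in> R. port v p \<notin> fst st}) (\<lambda>(F, m).
       (let Fp = F \<inter> {1..deg adj v};
            W = port v ` Fp - fst st;
            props = map (\<lambda>u. the (Px u)) (sorted_list_of_set {u \<in> W. Px u \<noteq> None})
        in b0loop Q n adj port Px v k (rs @ props)
             (fst st \<union> W, snd st + m + card Fp + length props)))"

text \<open>One phase of actor v, given the awake set; returns (new awake set, messages of the phase).\<close>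
definition act :: "qsearch \<Rightarrow> nat \<Rightarrow> (nat \<Rightarrow> nat \<Rightarrow> bool) \<Rightarrow> (nat \<Rightarrow> nat \<Rightarrow> nat) \<Rightarrow> nat set \<Rightarrow> nat \<Rightarrow>
    nat \<Rightarrow> nat set \<Rightarrow> (nat set \<times> nat) pmf" where
  "act Q n adj port A1 \<alpha> v aw =
     (if \<alpha> \<le> 2 \<or> gbit adj A1 \<alpha> v then
        bind_pmf (Q n {1..deg adj v} {p \<in> {1..deg adj v}. port v p \<notin> aw}) (\<lambda>(F, m).
          (let Fp = F \<inter> {1..deg adj v} in return_pmf (aw \<union> port v ` Fp, m + card Fp)))
      else (case Lambda adj port A1 \<alpha> v of
              None \<Rightarrow> return_pmf (aw, 0)
            | Some R \<Rightarrow> b0loop Q n adj port (Pi_adv n adj port A1 \<alpha>) v (n + 1) [R] (aw, 0)))"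

text \<open>Actors of an epoch act in increasing ID order; state (awake set, messages counted
 so far in phases whose actor is in B0).\<close>
fun run_actors :: "qsearch \<Rightarrow> nat \<Rightarrow> (nat \<Rightarrow> nat \<Rightarrow> bool) \<Rightarrow> (nat \<Rightarrow> nat \<Rightarrow> nat) \<Rightarrow> nat set \<Rightarrow> nat \<Rightarrow>
    nat list \<Rightarrow> nat set \<times> nat \<Rightarrow> (nat set \<times> nat) pmf" where
  "run_actors Q n adj port A1 \<alpha> [] st = return_pmf st"
| "run_actors Q n adj port A1 \<alpha> (v # vs) st =
     bind_pmf (act Q n adj port A1 \<alpha> v (fst st)) (\<lambda>(aw', m).
       run_actors Q n adj port A1 \<alpha> vs
         (aw', snd st + (if v \<in> B0 n adj A1 \<alpha> then m else 0)))"

text \<open>Nodes woken during an epoch are the actors of the next epoch.\<close>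
fun epochs :: "qsearch \<Rightarrow> nat \<Rightarrow> (nat \<Rightarrow> nat \<Rightarrow> bool) \<Rightarrow> (nat \<Rightarrow> nat \<Rightarrow> nat) \<Rightarrow> nat set \<Rightarrow> nat \<Rightarrow>
    nat \<Rightarrow> nat set \<Rightarrow> nat set \<times> nat \<Rightarrow> (nat set \<times> nat) pmf" where
  "epochs Q n adj port A1 \<alpha> 0 Act st = return_pmf st"
| "epochs Q n adj port A1 \<alpha> (Suc k) Act st =
     bind_pmf (run_actors Q n adj port A1 \<alpha> (sorted_list_of_set Act) st) (\<lambda>st'.
       epochs Q n adj port A1 \<alpha> k (fst st' - fst st) st')"

definition B0_cost :: "qsearch \<Rightarrow> nat \<Rightarrow> (nat \<Rightarrow> nat \<Rightarrow> bool) \<Rightarrow> (nat \<Rightarrow> nat \<Rightarrow> nat) \<Rightarrow> nat set \<Rightarrow> nat \<Rightarrow> nat pmf" where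
  "B0_cost Q n adj port A1 \<alpha> = map_pmf snd (epochs Q n adj port A1 \<alpha> (n + 1) A1 (A1, 0))"

end

theory Submission
  imports Defs
begin


lemma measure_bind_pmf_eq:
  "measure_pmf.prob (bind_pmf q f) G = (\<integral>x. measure_pmf.prob (f x) G \<partial>measure_pmf q)"
proof -
  have "ennreal (measure_pmf.prob (bind_pmf q f) G) = emeasure (measure_pmf (bind_pmf q f)) G"
    by (simp add: measure_pmf.emeasure_eq_measure)
  also have "\<dots> = (\<integral>\<^sup>+x. emeasure (f x) G \<partial>q)" by simp
  also have "\<dots> = (\<integral>\<^sup>+x. ennreal (measure_pmf.prob (f x) G) \<partial>q)"
    by (simp add: measure_pmf.emeasure_eq_measure)
  also have "\<dots> = ennreal (\<integral>x. measure_pmf.prob (f x) G \<partial>measure_pmf q)"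
    by (intro nn_integral_eq_integral measure_pmf.integrable_const_bound[where B=1]) auto
  finally show ?thesis by (simp add: integral_nonneg_AE)
qed

lemma prob_bind_ge:
  fixes q :: "'a pmf" and f :: "'a \<Rightarrow> 'b pmf"
  assumes h1: "measure_pmf.prob q A \<ge> 1 - e1"
    and h2: "\<And>x. x \<in> A \<Longrightarrow> x \<in> set_pmf q \<Longrightarrow> measure_pmf.prob (f x) G \<ge> 1 - e2"
    and e1: "0 \<le> e1" and e2: "0 \<le> e2"
  shows "measure_pmf.prob (bind_pmf q f) G \<ge> 1 - (e1 + e2)"
proof (cases "e2 \<le> 1")
  case False
  have "0 \<le> measure_pmf.prob (bind_pmf q f) G" by simp
  then show ?thesis using e1 False by linarith
next
  case True
  have eq: "measure_pmf.prob (bind_pmf q f) G = (\<integral>x. measure_pmf.prob (f x) G \<partial>measure_pmf q)"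
    by (rule measure_bind_pmf_eq)
  have i1: "integrable (measure_pmf q) (\<lambda>x. (1 - e2) * indicator A x)"
    by (intro measure_pmf.integrable_const_bound[where B="1"]) (auto simp: indicator_def True e2)
  have i2: "integrable (measure_pmf q) (\<lambda>x. measure_pmf.prob (f x) G)"
    by (intro measure_pmf.integrable_const_bound[where B="1"]) auto
  have ae: "AE x in measure_pmf q. (1 - e2) * indicator A x \<le> measure_pmf.prob (f x) G"
    unfolding AE_measure_pmf_iff
  proof
    fix x assume "x \<in> set_pmf q"
    then show "(1 - e2) * indicator A x \<le> measure_pmf.prob (f x) G"
      using h2[of x] True by (cases "x \<in> A") auto
  qed
  have "(\<integral>x. (1 - e2) * indicator A x \<partial>measure_pmf q) \<le> (\<integral>x. measure_pmf.prob (f x) G \<partial>measure_pmf q)"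
    by (rule integral_mono_AE[OF i1 i2 ae])
  moreover have "(\<integral>x. (1 - e2) * indicator A x \<partial>measure_pmf q) = (1 - e2) * measure_pmf.prob q A"
    by simp
  moreover have "(1 - e2) * measure_pmf.prob q A \<ge> (1 - e2) * (1 - e1)"
    using h1 True by (intro mult_left_mono) auto
  moreover have "(1 - e2) * (1 - e1) \<ge> 1 - (e1 + e2)"
    using e1 e2 by (simp add: algebra_simps)
  ultimately show ?thesis using eq by linarith
qed




definition Ul :: "(nat \<Rightarrow> nat \<Rightarrow> bool) \<Rightarrow> nat set \<Rightarrow> nat \<Rightarrow> nat set" where
  "Ul adj A1 j = (\<Union>i\<le>j. Aset adj A1 i)"

locale WI =
  fixes n :: nat and adj :: "nat \<Rightarrow> nat \<Rightarrow> bool" and port :: "nat \<Rightarrow> nat \<Rightarrow> nat" and A1 :: "nat set"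
  assumes wi: "wakeup_instance n adj port A1"
begin

abbreviation "A \<equiv> Aset adj A1"
abbreviation "U \<equiv> Ul adj A1"

lemma n_ge1: "1 \<le> n" using wi by (simp add: wakeup_instance_def)
lemma adj_sym: "adj u v \<Longrightarrow> adj v u" using wi by (simp add: wakeup_instance_def)
lemma adj_range: "adj u v \<Longrightarrow> u \<in> {1..n} \<and> v \<in> {1..n}" using wi by (simp add: wakeup_instance_def)
lemma A1_sub: "A1 \<subseteq> {1..n}" using wi by (simp add: wakeup_instance_def)
lemma A1_ne: "A1 \<noteq> {}" using wi by (simp add: wakeup_instance_def)
lemma conn: "u \<in> {1..n} \<Longrightarrow> v \<in> {1..n} \<Longrightarrow> adj\<^sup>*\<^sup>* u v" using wi by (simp add: wakeup_instance_def)
lemma port_bij: "v \<in> {1..n} \<Longrightarrow> bij_betw (port v) {1..deg adj v} (nbrs adj v)"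
  using wi by (simp add: wakeup_instance_def)

lemma nbrs_sub: "nbrs adj v \<subseteq> {1..n}"
  using adj_range by (auto simp: nbrs_def)
lemma nbrs_fin: "finite (nbrs adj v)"
  using nbrs_sub finite_subset by blast
lemma deg_le: "deg adj v \<le> n"
  unfolding deg_def using card_mono[OF _ nbrs_sub] by simp

lemma A_sub: "A i \<subseteq> {1..n}"
proof (induction i rule: nat_less_induct)
  case (1 i)
  show ?case
  proof (cases i)
    case 0 then show ?thesis by simp
  next
    case (Suc k) then show ?thesis
      using A1_sub nbrs_sub by (cases k) auto
  qed
qed

lemma A_fin: "finite (A i)" using A_sub finite_subset by blast

lemma Sset_eq: "1 \<le> j \<Longrightarrow> Sset adj A1 j = A (Suc j)"
  by (cases j) (auto simp: Sset_def)

lemma nbrs_layer: "1 \<le> j \<Longrightarrow> v \<in> A j \<Longrightarrow> nbrs adj v \<subseteq> A (j - 1) \<union> A j \<union> A (Suc j)"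
  using Sset_eq[of j] unfolding Sset_def by auto

lemma disj_aux: "i \<le> j \<Longrightarrow> A (Suc j) \<inter> A i = {}"
proof (induction j arbitrary: i)
  case 0 then show ?case by simp
next
  case (Suc j)
  show ?case
  proof (rule ccontr)
    assume "A (Suc (Suc j)) \<inter> A i \<noteq> {}"
    then obtain x where x1: "x \<in> A (Suc (Suc j))" and x2: "x \<in> A i" by blast
    from x1 obtain y where y: "y \<in> A (Suc j)" "adj y x" "x \<notin> A (Suc j)" "x \<notin> A j"
      by (auto simp: nbrs_def)
    have "i \<noteq> Suc j" "i \<noteq> j" using x2 y by auto
    with Suc.prems have ij: "Suc i \<le> j" by simp
    have "i \<noteq> 0" using x2 by (cases i) auto
    then have "nbrs adj x \<subseteq> A (i - 1) \<union> A i \<union> A (Suc i)"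
      using nbrs_layer[of i x] x2 by simp
    moreover have "y \<in> nbrs adj x" using y adj_sym by (simp add: nbrs_def)
    ultimately have "y \<in> A (i - 1) \<or> y \<in> A i \<or> y \<in> A (Suc i)" by blast
    moreover have "i - 1 \<le> j" "i \<le> j" using ij by auto
    ultimately show False using Suc.IH[of "i - 1"] Suc.IH[of i] Suc.IH[of "Suc i"] ij y(1) by blast
  qed
qed

lemma layers_disj: "i \<noteq> k \<Longrightarrow> A i \<inter> A k = {}"
proof (cases "i < k")
  case True
  then obtain j where "k = Suc j" "i \<le> j" by (cases k) auto
  then show ?thesis using disj_aux by blast
next
  case False
  assume "i \<noteq> k"
  with False obtain j where "i = Suc j" "k \<le> j" by (cases i) auto
  then show ?thesis using disj_aux by blast
qed

lemma U_Suc: "U (Suc j) = U j \<union> A (Suc j)"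
  by (simp add: Ul_def atMost_Suc sup_commute)
lemma U_sub: "U j \<subseteq> {1..n}" using A_sub by (auto simp: Ul_def)
lemma U_fin: "finite (U j)" using U_sub finite_subset by blast
lemma U_disj: "A (Suc j) \<inter> U j = {}"
  using disj_aux by (auto simp: Ul_def)
lemma A_in_U: "i \<le> j \<Longrightarrow> A i \<subseteq> U j" by (auto simp: Ul_def)

lemma nbrs_actor: "1 \<le> j \<Longrightarrow> v \<in> A j \<Longrightarrow> nbrs adj v \<subseteq> U j \<union> Sset adj A1 j"
  using nbrs_layer[of j v] Sset_eq[of j] A_in_U[of "j - 1" j] A_in_U[of j j] by auto

lemma epoch_eq: "1 \<le> j \<Longrightarrow> v \<in> A j \<Longrightarrow> epoch_of adj A1 v = j"
  unfolding epoch_of_def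
proof (rule Least_equality)
  show "1 \<le> j \<and> v \<in> A j" if "1 \<le> j" "v \<in> A j" using that by simp
  show "j \<le> y" if "1 \<le> j" "v \<in> A j" "1 \<le> y \<and> v \<in> A y" for y
    using that layers_disj[of j y] by (cases "j = y") auto
qed

lemma in_some_layer: "x \<in> {1..n} \<Longrightarrow> \<exists>i\<ge>1. x \<in> A i"
proof -
  assume x: "x \<in> {1..n}"
  obtain a where a: "a \<in> A1" using A1_ne by blast
  then have "a \<in> {1..n}" using A1_sub by blast
  then have "adj\<^sup>*\<^sup>* a x" using conn x by blast
  then show ?thesis
  proof (induction rule: rtranclp_induct)
    case base then show ?case using a by (intro exI[of _ 1]) simp
  next
    case (step y z)
    then obtain i where i: "1 \<le> i" "y \<in> A i" by blast
    then have "z \<in> A (i - 1) \<or> z \<in> A i \<or> z \<in> A (Suc i)"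
      using nbrs_layer[of i y] step(2) by (auto simp: nbrs_def)
    moreover have "z \<notin> A 0" by simp
    ultimately have "(i - 1 \<ge> 1 \<and> z \<in> A (i - 1)) \<or> z \<in> A i \<or> z \<in> A (Suc i)"
      by (cases "i - 1 = 0") auto
    then show ?case using i by (meson le_SucI)
  qed
qed

lemma epoch_layer: "x \<in> {1..n} \<Longrightarrow> 1 \<le> epoch_of adj A1 x \<and> x \<in> A (epoch_of adj A1 x)"
  using in_some_layer epoch_eq by metis

lemma Scum_formula: "Scum adj A1 j k = (\<Union>u\<in>{u\<in>A j. u < k}. nbrs adj u) \<inter> Sset adj A1 j"
proof (induction k)
  case 0 then show ?case by simp
next
  case (Suc k)
  have "{u\<in>A j. u < Suc k} = {u\<in>A j. u < k} \<union> (if k \<in> A j then {k} else {})" by (auto simp: less_Suc_eq)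
  then show ?case using Suc by (auto simp: Sv_def)
qed

lemma Sadv_actor: "1 \<le> j \<Longrightarrow> v \<in> A j \<Longrightarrow> Sadv adj A1 v = Sv adj A1 j v"
  using epoch_eq by (simp add: Sadv_def)

lemma Sadv_disj:
  assumes v: "v \<in> {1..n}" and v': "v' \<in> {1..n}" and u: "u \<in> Sadv adj A1 v" "u \<in> Sadv adj A1 v'"
  shows "v = v'"
proof -
  define i where "i = epoch_of adj A1 v"
  define i' where "i' = epoch_of adj A1 v'"
  have li: "1 \<le> i" "v \<in> A i" using epoch_layer[OF v] i_def by auto
  have li': "1 \<le> i'" "v' \<in> A i'" using epoch_layer[OF v'] i'_def by auto
  have u1: "u \<in> Sv adj A1 i v" using u(1) i_def by (simp add: Sadv_def)
  have u2: "u \<in> Sv adj A1 i' v'" using u(2) i'_def by (simp add: Sadv_def)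
  have "u \<in> A (Suc i)" using u1 Sset_eq[OF li(1)] by (auto simp: Sv_def)
  moreover have "u \<in> A (Suc i')" using u2 Sset_eq[OF li'(1)] by (auto simp: Sv_def)
  ultimately have ii: "i = i'" using layers_disj[of "Suc i" "Suc i'"] by (cases "i = i'") auto
  show ?thesis
  proof (rule ccontr)
    assume ne: "v \<noteq> v'"
    show False
    proof (cases "v < v'")
      case True
      have "u \<in> Scum adj A1 i v'" using u1 li True ii unfolding Scum_formula by (auto simp: Sv_def)
      then show False using u2 ii by (auto simp: Sv_def)
    next
      case False
      then have "v' < v" using ne by simp
      have "u \<in> Scum adj A1 i v" using u2 li' \<open>v' < v\<close> ii unfolding Scum_formula by (auto simp: Sv_def)
      then show False using u1 by (auto simp: Sv_def)
    qed
  qed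
qed

end




lemma tree_depth_ex: "d \<le> 2 ^ tree_depth d"
  unfolding tree_depth_def by (rule LeastI[of _ d]) simp

lemma tree_depth_pow: "1 \<le> N \<Longrightarrow> d \<le> N \<Longrightarrow> (2::nat) ^ tree_depth d \<le> 2 * N"
proof (cases "tree_depth d")
  case 0 then show "1 \<le> N \<Longrightarrow> d \<le> N \<Longrightarrow> ?thesis" by simp
next
  case (Suc D)
  have "\<not> d \<le> 2 ^ D"
  proof
    assume "d \<le> 2 ^ D"
    then have "tree_depth d \<le> D" unfolding tree_depth_def by (rule Least_le)
    then show False using Suc by simp
  qed
  then show "1 \<le> N \<Longrightarrow> d \<le> N \<Longrightarrow> ?thesis" using Suc by simp
qed

lemma blk_bound:
  assumes "1 \<le> N" "d \<le> N" "2 ^ \<beta> \<le> N"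
  shows "(2::nat) ^ (tree_depth d - min \<beta> (tree_depth d)) * 2 ^ \<beta> \<le> 2 * N"
proof (cases "\<beta> \<le> tree_depth d")
  case True
  then have "(2::nat) ^ (tree_depth d - min \<beta> (tree_depth d)) * 2 ^ \<beta> = 2 ^ tree_depth d"
    by (simp add: power_add[symmetric])
  then show ?thesis using tree_depth_pow[OF assms(1,2)] by simp
next
  case False
  then show ?thesis using assms by simp
qed

lemma prange_mem:
  assumes "1 \<le> p" "p \<le> d"
  shows "p \<in> prange d \<beta> p"
proof -
  define blk :: nat where "blk = 2 ^ (tree_depth d - min \<beta> (tree_depth d))"
  have b1: "1 \<le> blk" unfolding blk_def by simp
  define b where "b = (p - 1) div blk"
  have "b * blk \<le> p - 1" unfolding b_def using div_mult_mod_eq[of "p - 1" blk] by linarith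
  moreover have "p - 1 < b * blk + blk" unfolding b_def using b1
    using mod_less_divisor[of blk "p - 1"] div_mult_mod_eq[of "p - 1" blk] by linarith
  then have "p \<le> b * blk + blk - 1 + 1" using b1 by linarith
  have eq: "prange d \<beta> p = {min (b * blk + 1) d .. min (b * blk + blk - 1 + 1) d}"
    unfolding prange_def Let_def leaf_label_def blk_def[symmetric] b_def[symmetric] by simp
  have l1: "min (b * blk + 1) d \<le> p" using \<open>b * blk \<le> p - 1\<close> assms by linarith
  have l2: "p \<le> min (b * blk + blk - 1 + 1) d" using \<open>p \<le> b * blk + blk - 1 + 1\<close> assms by linarith
  show ?thesis unfolding eq atLeastAtMost_iff using l1 l2 by (rule conjI)
qed

lemma prange_sub:
  assumes "1 \<le> d" shows "prange d \<beta> p \<subseteq> {1..d}"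
  using assms unfolding prange_def Let_def leaf_label_def by auto

lemma prange_card:
  "card (prange d \<beta> p) \<le> 2 ^ (tree_depth d - min \<beta> (tree_depth d))"
proof -
  define blk :: nat where "blk = 2 ^ (tree_depth d - min \<beta> (tree_depth d))"
  have b1: "1 \<le> blk" unfolding blk_def by simp
  define b where "b = (p - 1) div blk"
  have eq: "prange d \<beta> p = {min (b * blk + 1) d .. min (b * blk + blk - 1 + 1) d}"
    unfolding prange_def Let_def leaf_label_def blk_def[symmetric] b_def[symmetric] by simp
  have "b * blk + blk - 1 + 1 = b * blk + blk" using b1 by simp
  then have "card (prange d \<beta> p) = Suc (min (b * blk + blk) d) - min (b * blk + 1) d"
    unfolding eq by simp
  also have "\<dots> \<le> blk" using b1 by (cases "b * blk + 1 \<le> d") auto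
  finally show ?thesis unfolding blk_def .
qed

lemma prange_card_bound:
  assumes "1 \<le> N" "d \<le> N" "2 ^ \<beta> \<le> N"
  shows "real (card (prange d \<beta> p)) * 2 ^ \<beta> \<le> 2 * real N"
proof -
  have "card (prange d \<beta> p) * 2 ^ \<beta> \<le> 2 * N"
    using prange_card[of d \<beta> p] blk_bound[OF assms] mult_le_mono1 le_trans by blast
  then have "real (card (prange d \<beta> p) * 2 ^ \<beta>) \<le> real (2 * N)" by (simp only: of_nat_le_iff)
  then show ?thesis by simp
qed




definition succ_set :: "nat \<Rightarrow> real \<Rightarrow> nat set \<Rightarrow> nat set \<Rightarrow> (nat set \<times> nat) set" where
  "succ_set n K0 X T = {(F, m). F = T \<and> real m \<le> K0 * sqrt (real (card X) * real (max (card T) 1)) * ln (real n)}"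

context WI
begin

lemma portnum_in:
  assumes "v \<in> {1..n}" "u \<in> nbrs adj v"
  shows "portnum adj port v u \<in> {1..deg adj v} \<and> port v (portnum adj port v u) = u"
proof -
  have b: "bij_betw (port v) {1..deg adj v} (nbrs adj v)" using port_bij assms(1) by blast
  then have "u \<in> port v ` {1..deg adj v}" using assms(2) by (simp add: bij_betw_def)
  then have "inv_into {1..deg adj v} (port v) u \<in> {1..deg adj v}" by (rule inv_into_into)
  moreover have "port v (inv_into {1..deg adj v} (port v) u) = u" using \<open>u \<in> port v ` {1..deg adj v}\<close> by (rule f_inv_into_f)
  ultimately show ?thesis unfolding portnum_def by blast
qed

lemma port_in:
  assumes "v \<in> {1..n}" "p \<in> {1..deg adj v}"
  shows "port v p \<in> nbrs adj v \<and> portnum adj port v (port v p) = p"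
proof -
  have b: "bij_betw (port v) {1..deg adj v} (nbrs adj v)" using port_bij assms(1) by blast
  have "port v p \<in> nbrs adj v" using bij_betwE[OF b] assms(2) by blast
  moreover have "inv_into {1..deg adj v} (port v) (port v p) = p"
    by (rule inv_into_f_f[OF bij_betw_imp_inj_on[OF b] assms(2)])
  ultimately show ?thesis unfolding portnum_def by simp
qed

lemma Sadv_sub_nbrs: "Sadv adj A1 v \<subseteq> nbrs adj v"
  by (auto simp: Sadv_def Sv_def)

end

locale ALG = WI +
  fixes Q :: qsearch and K0 :: real and \<alpha> :: nat and \<epsilon> :: real
  assumes qs: "\<And>X T. finite X \<Longrightarrow> T \<subseteq> X \<Longrightarrow> measure_pmf.prob (Q n X T) (succ_set n K0 X T) \<ge> 1 - \<epsilon>"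
    and eps0: "0 \<le> \<epsilon>" and K0: "0 \<le> K0" and bn: "2 ^ beta \<alpha> \<le> n"
begin

definition Cst :: real where
  "Cst = K0 * ln (real n) * sqrt (2 * real n / 2 ^ beta \<alpha>) + 2"

lemma Cst_nonneg: "0 \<le> Cst"
  using K0 n_ge1 by (simp add: Cst_def)

abbreviation "S v j \<equiv> chainS adj port A1 \<alpha> v j"
abbreviation "R v j \<equiv> Prange adj port (beta \<alpha>) v (Min (S v j))"
abbreviation "Px \<equiv> Pi_adv n adj port A1 \<alpha>"

lemma S_Suc_sub: "S v (Suc j) \<subseteq> S v j"
  by (auto simp: Let_def)

lemma S_Suc_eq: "S v j \<noteq> {} \<Longrightarrow> S v (Suc j) = S v j - {u \<in> S v j. portnum adj port v u \<in> R v j}"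
  by (simp add: Let_def)

lemma S_Suc_empty: "S v j = {} \<Longrightarrow> S v (Suc j) = {}"
  by (simp add: Let_def)

declare chainS.simps(2)[simp del]

lemma S_mono: "j \<le> j' \<Longrightarrow> S v j' \<subseteq> S v j"
proof (induction j' rule: dec_induct)
  case base then show ?case by simp
next
  case (step j') then show ?case using S_Suc_sub by blast
qed

lemma S_sub: "S v j \<subseteq> Sadv adj A1 v"
  using S_mono[of 0 j v] by simp

lemma S_fin: "finite (S v j)"
  by (rule finite_subset[OF order_trans[OF S_sub Sadv_sub_nbrs] nbrs_fin])

lemma Min_in:
  assumes v: "v \<in> {1..n}" and ne: "S v j \<noteq> {}"
  shows "Min (S v j) \<in> S v j" "portnum adj port v (Min (S v j)) \<in> R v j"
    "portnum adj port v (Min (S v j)) \<in> {1..deg adj v}"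
proof -
  show m: "Min (S v j) \<in> S v j" using Min_in[OF S_fin ne] .
  then have "Min (S v j) \<in> nbrs adj v" using S_sub Sadv_sub_nbrs by blast
  then show p: "portnum adj port v (Min (S v j)) \<in> {1..deg adj v}" using portnum_in[OF v] by blast
  then show "portnum adj port v (Min (S v j)) \<in> R v j"
    unfolding Prange_def using prange_mem by auto
qed

lemma Min_notin:
  assumes v: "v \<in> {1..n}" and ne: "S v j \<noteq> {}"
  shows "Min (S v j) \<notin> S v (Suc j)"
  using Min_in[OF v ne] S_Suc_eq[OF ne] by blast

lemma card_S_Suc:
  assumes v: "v \<in> {1..n}" and ne: "S v j \<noteq> {}"
  shows "card (S v (Suc j)) < card (S v j)"
proof (rule psubset_card_mono[OF S_fin])
  show "S v (Suc j) \<subset> S v j"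
    using Min_notin[OF v ne] Min_in(1)[OF v ne] S_Suc_sub[of v j] by blast
qed

lemma R_sub:
  assumes v: "v \<in> {1..n}" and ne: "S v j \<noteq> {}"
  shows "R v j \<subseteq> {1..deg adj v}"
proof -
  have "1 \<le> deg adj v" using Min_in(3)[OF v ne] by auto
  then show ?thesis unfolding Prange_def by (rule prange_sub)
qed

lemma R_card: "real (card (R v j)) * 2 ^ beta \<alpha> \<le> 2 * real n"
  unfolding Prange_def by (rule prange_card_bound[OF n_ge1 deg_le bn])

lemma proxy_unique:
  assumes vB: "v \<in> B0 n adj A1 \<alpha>" and u: "u \<in> S v j" "u \<notin> S v (Suc j)"
    and pc: "proxy_cond n adj port A1 \<alpha> u (v', j')"
  shows "v' = v \<and> j' = j"
proof -
  have v: "v \<in> {1..n}" using vB by (simp add: B0_def)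
  have pc': "v' \<in> B0 n adj A1 \<alpha>" "S v' j' \<noteq> {}" "u = Min (S v' j')" "S v' (Suc j') \<noteq> {}"
    using pc by (simp_all add: proxy_cond_def)
  have v': "v' \<in> {1..n}" using pc'(1) by (simp add: B0_def)
  have "u \<in> S v' j'" using Min_in(1)[OF v' pc'(2)] pc'(3) by simp
  then have "u \<in> Sadv adj A1 v'" using S_sub by blast
  moreover have "u \<in> Sadv adj A1 v" using u(1) S_sub by blast
  ultimately have vv: "v' = v" using Sadv_disj[OF v v'] by blast
  have "j' = j"
  proof (rule ccontr)
    assume "j' \<noteq> j"
    then consider "j' < j" | "j < j'" by linarith
    then show False
    proof cases
      case 1
      then have "S v j \<subseteq> S v (Suc j')" using S_mono by simp
      then show False using Min_notin[OF v] pc' vv u(1) by blast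
    next
      case 2
      then have "S v j' \<subseteq> S v (Suc j)" using S_mono by simp
      then show False using Min_in(1)[OF v] pc' vv u(2) by blast
    qed
  qed
  with vv show ?thesis by simp
qed

lemma Px_eq:
  assumes vB: "v \<in> B0 n adj A1 \<alpha>" and u: "u \<in> S v j" "u \<notin> S v (Suc j)"
  shows "Px u = (if u = Min (S v j) \<and> S v (Suc j) \<noteq> {} then Some (R v (Suc j)) else None)"
proof (cases "u = Min (S v j) \<and> S v (Suc j) \<noteq> {}")
  case True
  have ne: "S v j \<noteq> {}" using u(1) by blast
  have pc: "proxy_cond n adj port A1 \<alpha> u (v, j)"
    unfolding proxy_cond_def Let_def fst_conv snd_conv using True vB ne by blast
  have ex: "\<exists>vj. proxy_cond n adj port A1 \<alpha> u vj" using pc by blast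
  have sm: "(SOME vj. proxy_cond n adj port A1 \<alpha> u vj) = (v, j)"
  proof (rule some_equality)
    show "proxy_cond n adj port A1 \<alpha> u (v, j)" by (rule pc)
    fix vj assume "proxy_cond n adj port A1 \<alpha> u vj"
    then have "fst vj = v \<and> snd vj = j" using proxy_unique[OF vB u, of "fst vj" "snd vj"] by simp
    then show "vj = (v, j)" by (simp add: prod_eq_iff)
  qed
  have "Px u = Some (R v (Suc j))"
    unfolding Pi_adv_def using ex sm by (simp only: if_True Let_def fst_conv snd_conv)
  then show ?thesis using True by simp
next
  case False
  have "\<not> (\<exists>vj. proxy_cond n adj port A1 \<alpha> u vj)"
  proof
    assume "\<exists>vj. proxy_cond n adj port A1 \<alpha> u vj"
    then obtain v' j' where pc: "proxy_cond n adj port A1 \<alpha> u (v', j')" by auto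
    then have "v' = v \<and> j' = j" using proxy_unique[OF vB u] by blast
    then show False using pc False unfolding proxy_cond_def Let_def fst_conv snd_conv by blast
  qed
  then show ?thesis using False unfolding Pi_adv_def by (simp only: if_False)
qed

lemma cost_step:
  fixes m r t len K L B :: real
  assumes "m \<le> K * sqrt (r * max t 1) * L" "r \<le> B" "1 \<le> t" "0 \<le> K" "0 \<le> L" "len \<le> 1" "0 \<le> r"
  shows "m + t + len \<le> (K * L * sqrt B + 2) * t"
proof -
  have "sqrt (r * max t 1) = sqrt r * sqrt t" using assms(3) by (simp add: real_sqrt_mult max_def)
  also have "\<dots> \<le> sqrt B * t"
  proof (rule mult_mono)
    show "sqrt r \<le> sqrt B" using assms(2) by simp
    have s1: "1 \<le> sqrt t" using assms(3) by simp
    have "sqrt t * 1 \<le> sqrt t * sqrt t" using s1 by (intro mult_left_mono) auto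
    then show "sqrt t \<le> t" using assms(3) by simp
  qed (use assms in auto)
  finally have "K * sqrt (r * max t 1) * L \<le> K * (sqrt B * t) * L"
    using assms(4,5) by (simp add: mult_left_mono mult_right_mono)
  then have "m \<le> K * L * sqrt B * t" using assms(1) by (simp add: algebra_simps)
  then show ?thesis using assms(3,6) by (simp add: algebra_simps)
qed

lemma b0loop_good:
  assumes vB: "v \<in> B0 n adj A1 \<alpha>" and aw0: "nbrs adj v - aw0 = Sadv adj A1 v"
  shows "S v j \<noteq> {} \<Longrightarrow> card (S v j) \<le> k \<Longrightarrow> fst st = aw0 \<union> (Sadv adj A1 v - S v j) \<Longrightarrow>
    real (snd st) \<le> Cst * real (card (Sadv adj A1 v - S v j)) \<Longrightarrow>
    1 - \<epsilon> * real (card (S v j)) \<le> measure_pmf.prob (b0loop Q n adj port Px v k [R v j] st)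
      {s. fst s = aw0 \<union> Sadv adj A1 v \<and> real (snd s) \<le> Cst * real (card (Sadv adj A1 v))}"
proof (induction k arbitrary: j st)
  case 0
  then show ?case using S_fin[of v j] by simp
next
  case (Suc k)
  let ?S0 = "Sadv adj A1 v"
  let ?G = "{s. fst s = aw0 \<union> ?S0 \<and> real (snd s) \<le> Cst * real (card ?S0)}"
  have v: "v \<in> {1..n}" using vB by (simp add: B0_def)
  have ne: "S v j \<noteq> {}" by fact
  have Sj0: "S v j \<subseteq> ?S0" by (rule S_sub)
  have S0n: "?S0 \<subseteq> nbrs adj v" by (rule Sadv_sub_nbrs)
  have fin0: "finite ?S0" using S0n nbrs_fin finite_subset by blast
  have dis0: "?S0 \<inter> aw0 = {}" using aw0 by blast
  have Rsub: "R v j \<subseteq> {1..deg adj v}" using R_sub[OF v ne] .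
  have finR: "finite (R v j)" using Rsub finite_subset by blast
  have st1: "fst st = aw0 \<union> (?S0 - S v j)" by fact
  define T where "T = {p \<in> R v j. port v p \<notin> fst st}"
  define X where "X = S v j - S v (Suc j)"
  have X_eq: "X = {u \<in> S v j. portnum adj port v u \<in> R v j}"
    unfolding X_def using S_Suc_eq[OF ne] by blast
  have T_eq: "T = {p \<in> R v j. port v p \<in> S v j}"
  proof -
    have "port v p \<notin> fst st \<longleftrightarrow> port v p \<in> S v j" if "p \<in> R v j" for p
    proof -
      have "port v p \<in> nbrs adj v" using port_in[OF v] that Rsub by blast
      then show ?thesis using st1 aw0 Sj0 by blast
    qed
    then show ?thesis unfolding T_def by blast
  qed
  have TR: "T \<subseteq> R v j" unfolding T_def by blast
  have pT: "port v ` T = X"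
  proof
    show "port v ` T \<subseteq> X"
    proof
      fix u assume "u \<in> port v ` T"
      then obtain p where p: "p \<in> T" "u = port v p" by blast
      have "p \<in> {1..deg adj v}" using p TR Rsub by blast
      then have "portnum adj port v u = p" using port_in[OF v] p by blast
      then show "u \<in> X" using p unfolding X_eq T_eq by auto
    qed
    show "X \<subseteq> port v ` T"
    proof
      fix u assume u: "u \<in> X"
      then have "u \<in> nbrs adj v" unfolding X_eq using Sj0 S0n by blast
      then have "port v (portnum adj port v u) = u" using portnum_in[OF v] by blast
      moreover have "portnum adj port v u \<in> T" using u \<open>port v (portnum adj port v u) = u\<close>
        unfolding X_eq T_eq by auto
      ultimately show "u \<in> port v ` T" by (metis image_eqI)
    qed
  qed
  have injT: "inj_on (port v) T"
    using bij_betw_imp_inj_on[OF port_bij[OF v]] TR Rsub inj_on_subset by blast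
  have cardTX: "card T = card X" using card_image[OF injT] pT by simp
  have finX: "finite X" using X_eq S_fin[of v j] by auto
  have MinX: "Min (S v j) \<in> X" using Min_in[OF v ne] X_eq by blast
  have "0 < card X" using MinX finX card_gt_0_iff by blast
  then have cX: "1 \<le> card X" by simp
  have XS: "X \<subseteq> S v j" unfolding X_def by blast
  have Xdis: "X \<inter> fst st = {}" using XS Sj0 dis0 st1 by blast
  have Fp: "T \<inter> {1..deg adj v} = T" using TR Rsub by blast
  have W_eq: "port v ` (T \<inter> {1..deg adj v}) - fst st = X" using Fp pT Xdis by blast
  have W_eq': "port v ` T - fst st = X" using pT Xdis by blast
  have props: "{u \<in> X. Px u \<noteq> None} = (if S v (Suc j) \<noteq> {} then {Min (S v j)} else {})"
  proof -
    have "Px u \<noteq> None \<longleftrightarrow> u = Min (S v j) \<and> S v (Suc j) \<noteq> {}" if "u \<in> X" for u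
      using Px_eq[OF vB, of u j] that unfolding X_def by auto
    then show ?thesis using MinX by auto
  qed
  have plist: "map (\<lambda>u. the (Px u)) (sorted_list_of_set {u \<in> X. Px u \<noteq> None}) =
      (if S v (Suc j) \<noteq> {} then [R v (Suc j)] else [])"
  proof (cases "S v (Suc j) \<noteq> {}")
    case True
    have "Px (Min (S v j)) = Some (R v (Suc j))"
      using Px_eq[OF vB Min_in(1)[OF v ne] Min_notin[OF v ne]] True by simp
    moreover have e: "{u \<in> X. Px u \<noteq> None} = {Min (S v j)}" using props True by (simp only: if_True if_False not_False_eq_True not_True_eq_False)
    ultimately show ?thesis using True unfolding e by simp
  next
    case False
    have e: "{u \<in> X. Px u \<noteq> None} = {}" using props False by (simp only: if_True if_False not_False_eq_True not_True_eq_False)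
    show ?thesis using False unfolding e by simp
  qed
  have newaw: "fst st \<union> X = aw0 \<union> (?S0 - S v (Suc j))"
    using S_Suc_sub[of v j] Sj0 unfolding st1 X_def by auto
  have cardnew: "card (?S0 - S v (Suc j)) = card (?S0 - S v j) + card X"
  proof -
    have "?S0 - S v (Suc j) = (?S0 - S v j) \<union> X" using S_Suc_sub[of v j] Sj0 unfolding X_def by auto
    moreover have "(?S0 - S v j) \<inter> X = {}" unfolding X_def by blast
    ultimately show ?thesis using fin0 finX by (simp add: card_Un_disjoint)
  qed
  have unf: "b0loop Q n adj port Px v (Suc k) [R v j] st =
     bind_pmf (Q n (R v j) T) (\<lambda>(F, m).
       (let Fp = F \<inter> {1..deg adj v};
            W = port v ` Fp - fst st;
            props = map (\<lambda>u. the (Px u)) (sorted_list_of_set {u \<in> W. Px u \<noteq> None})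
        in b0loop Q n adj port Px v k ([] @ props)
             (fst st \<union> W, snd st + m + card Fp + length props)))"
    unfolding T_def by simp
  have "0 < card (S v j)" using ne S_fin[of v j] card_gt_0_iff by blast
  then have c1: "1 \<le> card (S v j)" by simp
  have main: "1 - (\<epsilon> + \<epsilon> * (real (card (S v j)) - 1)) \<le> measure_pmf.prob (b0loop Q n adj port Px v (Suc k) [R v j] st) ?G"
    unfolding unf
  proof (rule prob_bind_ge[where A = "succ_set n K0 (R v j) T"])
    show "1 - \<epsilon> \<le> measure_pmf.prob (Q n (R v j) T) (succ_set n K0 (R v j) T)"
      by (rule qs[OF finR TR])
    show "0 \<le> \<epsilon>" by (rule eps0)
    show "0 \<le> \<epsilon> * (real (card (S v j)) - 1)" using eps0 c1 by simp
    fix x assume x: "x \<in> succ_set n K0 (R v j) T"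
    then obtain m where xm: "x = (T, m)" and
      mb: "real m \<le> K0 * sqrt (real (card (R v j)) * real (max (card T) 1)) * ln (real n)"
      unfolding succ_set_def by auto
    define len :: nat where "len = (if S v (Suc j) \<noteq> {} then 1 else 0)"
    have cost: "real (snd st + m + card T + len) \<le> Cst * real (card (?S0 - S v (Suc j)))"
    proof -
      have rb: "real (card (R v j)) \<le> 2 * real n / 2 ^ beta \<alpha>"
        using R_card[of v j] by (simp add: pos_le_divide_eq)
      have "real m + real (card T) + real len \<le> Cst * real (card T)"
        unfolding Cst_def
      proof (rule cost_step)
        show "real m \<le> K0 * sqrt (real (card (R v j)) * max (real (card T)) 1) * ln (real n)"
          using mb by (simp add: of_nat_max)
      qed (use rb cX cardTX K0 n_ge1 len_def in auto)
      then show ?thesis using Suc.prems(4) cardnew cardTX by (simp add: algebra_simps)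
    qed
    show "1 - \<epsilon> * (real (card (S v j)) - 1) \<le> measure_pmf.prob
      ((\<lambda>(F, m). let Fp = F \<inter> {1..deg adj v}; W = port v ` Fp - fst st;
            props = map (\<lambda>u. the (Px u)) (sorted_list_of_set {u \<in> W. Px u \<noteq> None})
        in b0loop Q n adj port Px v k ([] @ props) (fst st \<union> W, snd st + m + card Fp + length props)) x) ?G"
    proof (cases "S v (Suc j) \<noteq> {}")
      case True
      have eq: "(\<lambda>(F, m). let Fp = F \<inter> {1..deg adj v}; W = port v ` Fp - fst st;
            props = map (\<lambda>u. the (Px u)) (sorted_list_of_set {u \<in> W. Px u \<noteq> None})
        in b0loop Q n adj port Px v k ([] @ props) (fst st \<union> W, snd st + m + card Fp + length props)) x
        = b0loop Q n adj port Px v k [R v (Suc j)] (aw0 \<union> (?S0 - S v (Suc j)), snd st + m + card T + len)"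
      proof -
        have pl: "map (\<lambda>u. the (Px u)) (sorted_list_of_set {u \<in> X. Px u \<noteq> None}) = [R v (Suc j)]"
          using plist True by (simp only: if_True if_False not_False_eq_True not_True_eq_False)
        show ?thesis unfolding xm
          by (simp only: prod.case Let_def Fp W_eq' pl append_Nil newaw) (simp add: len_def True)
      qed
      have ck: "card (S v (Suc j)) \<le> k" using card_S_Suc[OF v ne] Suc.prems(2) by simp
      have "1 - \<epsilon> * real (card (S v (Suc j))) \<le> measure_pmf.prob
          (b0loop Q n adj port Px v k [R v (Suc j)] (aw0 \<union> (?S0 - S v (Suc j)), snd st + m + card T + len)) ?G"
        using Suc.IH[OF True ck] cost by simp
      moreover have "\<epsilon> * real (card (S v (Suc j))) \<le> \<epsilon> * (real (card (S v j)) - 1)"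
        using card_S_Suc[OF v ne] eps0 by (intro mult_left_mono) auto
      ultimately show ?thesis unfolding eq by linarith
    next
      case False
      then have SS: "S v (Suc j) = {}" by simp
      have eq: "(\<lambda>(F, m). let Fp = F \<inter> {1..deg adj v}; W = port v ` Fp - fst st;
            props = map (\<lambda>u. the (Px u)) (sorted_list_of_set {u \<in> W. Px u \<noteq> None})
        in b0loop Q n adj port Px v k ([] @ props) (fst st \<union> W, snd st + m + card Fp + length props)) x
        = return_pmf (aw0 \<union> ?S0, snd st + m + card T + len)"
      proof -
        have pl: "map (\<lambda>u. the (Px u)) (sorted_list_of_set {u \<in> X. Px u \<noteq> None}) = []"
          using plist SS by (simp only: if_True if_False not_False_eq_True not_True_eq_False simp_thms)
        have nw: "fst st \<union> X = aw0 \<union> ?S0" using newaw SS by simp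
        show ?thesis unfolding xm
          by (simp only: prod.case Let_def Fp W_eq' pl append_Nil nw) (cases k, simp_all add: len_def SS)
      qed
      have "(aw0 \<union> ?S0, snd st + m + card T + len) \<in> ?G" using cost SS by simp
      then have "measure_pmf.prob (return_pmf (aw0 \<union> ?S0, snd st + m + card T + len)) ?G = 1" by simp
      then show ?thesis unfolding eq using eps0 c1 by simp
    qed
  qed
  have e: "1 - \<epsilon> * real (card (S v j)) = 1 - (\<epsilon> + \<epsilon> * (real (card (S v j)) - 1))"
    by (simp add: algebra_simps)
  show ?case unfolding e by (rule main)
qed

end




context ALG
begin

lemma act_good:
  assumes j: "1 \<le> j" and vA: "v \<in> A j" and aw: "aw = U j \<union> Scum adj A1 j v"
  shows "1 - \<epsilon> * (1 + real (card (Sadv adj A1 v))) \<le> measure_pmf.prob (act Q n adj port A1 \<alpha> v aw)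
     {(aw', m). aw' = aw \<union> Sadv adj A1 v \<and> (v \<in> B0 n adj A1 \<alpha> \<longrightarrow> real m \<le> Cst * real (card (Sadv adj A1 v)))}"
    (is "_ \<le> measure_pmf.prob _ ?G")
proof -
  let ?S0 = "Sadv adj A1 v"
  have v: "v \<in> {1..n}" using vA A_sub by blast
  have sadv: "?S0 = Sv adj A1 j v" using Sadv_actor[OF j vA] .
  have nb: "nbrs adj v \<subseteq> U j \<union> Sset adj A1 j" using nbrs_actor[OF j vA] .
  have dj: "U j \<inter> Sset adj A1 j = {}" using U_disj[of j] Sset_eq[OF j] by blast
  have sc: "Scum adj A1 j v \<subseteq> Sset adj A1 j" unfolding Scum_formula by blast
  have sl: "nbrs adj v - aw = ?S0"
    unfolding sadv Sv_def aw using nb dj sc by blast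
  have c0: "0 \<le> \<epsilon> * real (card ?S0)" using eps0 by simp
  show ?thesis
  proof (cases "\<alpha> \<le> 2 \<or> gbit adj A1 \<alpha> v")
    case True
    have nB: "v \<notin> B0 n adj A1 \<alpha>" using True by (auto simp: B0_def)
    define T where "T = {p \<in> {1..deg adj v}. port v p \<notin> aw}"
    have pT: "port v ` T = nbrs adj v - aw"
    proof
      show "port v ` T \<subseteq> nbrs adj v - aw" unfolding T_def using port_in[OF v] by blast
      show "nbrs adj v - aw \<subseteq> port v ` T"
      proof
        fix u assume u: "u \<in> nbrs adj v - aw"
        then have "portnum adj port v u \<in> T" "port v (portnum adj port v u) = u"
          using portnum_in[OF v, of u] unfolding T_def by auto
        then show "u \<in> port v ` T" by (metis image_eqI)
      qed
    qed
    have TT: "T \<inter> {1..deg adj v} = T" unfolding T_def by blast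
    have unf: "act Q n adj port A1 \<alpha> v aw = bind_pmf (Q n {1..deg adj v} T) (\<lambda>(F, m).
          (let Fp = F \<inter> {1..deg adj v} in return_pmf (aw \<union> port v ` Fp, m + card Fp)))"
      unfolding act_def T_def using True by simp
    have "1 - (\<epsilon> + \<epsilon> * real (card ?S0)) \<le> measure_pmf.prob (act Q n adj port A1 \<alpha> v aw) ?G"
      unfolding unf
    proof (rule prob_bind_ge[where A = "succ_set n K0 {1..deg adj v} T"])
      show "1 - \<epsilon> \<le> measure_pmf.prob (Q n {1..deg adj v} T) (succ_set n K0 {1..deg adj v} T)"
        by (rule qs) (auto simp: T_def)
      fix x assume "x \<in> succ_set n K0 {1..deg adj v} T"
      then obtain m where xm: "x = (T, m)" unfolding succ_set_def by auto
      have "(\<lambda>(F, m). (let Fp = F \<inter> {1..deg adj v} in return_pmf (aw \<union> port v ` Fp, m + card Fp))) x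
          = return_pmf (aw \<union> ?S0, m + card T)"
        unfolding xm by (simp only: prod.case Let_def TT pT sl)
      moreover have "(aw \<union> ?S0, m + card T) \<in> ?G" using nB by simp
      ultimately show "1 - \<epsilon> * real (card ?S0) \<le> measure_pmf.prob
          ((\<lambda>(F, m). (let Fp = F \<inter> {1..deg adj v} in return_pmf (aw \<union> port v ` Fp, m + card Fp))) x) ?G"
        using c0 by simp
    qed (use eps0 c0 in auto)
    then show ?thesis by (simp add: algebra_simps)
  next
    case False
    then have vB: "v \<in> B0 n adj A1 \<alpha>" using v by (auto simp: B0_def)
    have gb: "\<not> gbit adj A1 \<alpha> v" "3 \<le> \<alpha>" using False by auto
    show ?thesis
    proof (cases "?S0 = {}")
      case True
      have "act Q n adj port A1 \<alpha> v aw = return_pmf (aw, 0)"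
        unfolding act_def Lambda_def using False True by simp
      moreover have "(aw, 0) \<in> ?G" using True by simp
      ultimately show ?thesis using eps0 by simp
    next
      case ne: False
      have S0: "S v 0 = ?S0" by simp
      have "act Q n adj port A1 \<alpha> v aw = b0loop Q n adj port Px v (n + 1) [R v 0] (aw, 0)"
        unfolding act_def Lambda_def using False ne gb by simp
      moreover have "1 - \<epsilon> * real (card (S v 0)) \<le> measure_pmf.prob (b0loop Q n adj port Px v (n + 1) [R v 0] (aw, 0))
          {s. fst s = aw \<union> ?S0 \<and> real (snd s) \<le> Cst * real (card ?S0)}"
      proof (rule b0loop_good[OF vB sl])
        show "S v 0 \<noteq> {}" using ne S0 by simp
        have "card ?S0 \<le> card (nbrs adj v)" using Sadv_sub_nbrs nbrs_fin by (rule card_mono[rotated])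
        then show "card (S v 0) \<le> n + 1" using deg_le[of v] S0 unfolding deg_def by simp
        show "fst (aw, 0) = aw \<union> (?S0 - S v 0)" using S0 by simp
        show "real (snd (aw, 0::nat)) \<le> Cst * real (card (?S0 - S v 0))" using S0 by simp
      qed
      moreover have "measure_pmf.prob (b0loop Q n adj port Px v (n + 1) [R v 0] (aw, 0))
          {s. fst s = aw \<union> ?S0 \<and> real (snd s) \<le> Cst * real (card ?S0)}
          \<le> measure_pmf.prob (b0loop Q n adj port Px v (n + 1) [R v 0] (aw, 0)) ?G"
        by (rule measure_pmf.finite_measure_mono) auto
      ultimately show ?thesis using S0 eps0 by (simp add: algebra_simps)
    qed
  qed
qed

lemma run_good:
  assumes j: "1 \<le> j"
  shows "sorted vs \<Longrightarrow> distinct vs \<Longrightarrow> set vs \<subseteq> A j \<Longrightarrow> (\<forall>u\<in>A j - set vs. \<forall>x\<in>set vs. u < x) \<Longrightarrow>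
    fst st = U j \<union> ((\<Union>u\<in>A j - set vs. nbrs adj u) \<inter> Sset adj A1 j) \<Longrightarrow>
    real (snd st) \<le> Cst * real (card (fst st)) \<Longrightarrow>
    1 - \<epsilon> * (real (length vs) + real (card (Sset adj A1 j - fst st))) \<le>
      measure_pmf.prob (run_actors Q n adj port A1 \<alpha> vs st)
        {s. fst s = U j \<union> Sset adj A1 j \<and> real (snd s) \<le> Cst * real (card (fst s))}"
proof (induction vs arbitrary: st)
  case Nil
  have "Sset adj A1 j \<subseteq> (\<Union>u\<in>A j. nbrs adj u)" unfolding Sset_def by blast
  then have "fst st = U j \<union> Sset adj A1 j" using Nil.prems(5) by auto
  then have "st \<in> {s. fst s = U j \<union> Sset adj A1 j \<and> real (snd s) \<le> Cst * real (card (fst s))}"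
    using Nil.prems(6) by simp
  then have "measure_pmf.prob (run_actors Q n adj port A1 \<alpha> [] st) {s. fst s = U j \<union> Sset adj A1 j \<and> real (snd s) \<le> Cst * real (card (fst s))} = 1"
    by (simp only: run_actors.simps(1) measure_return_pmf indicator_simps)
  moreover have "0 \<le> \<epsilon> * (real (length ([]::nat list)) + real (card (Sset adj A1 j - fst st)))" using eps0 by simp
  ultimately show ?case by linarith
next
  case (Cons v vs)
  let ?G = "{s. fst s = U j \<union> Sset adj A1 j \<and> real (snd s) \<le> Cst * real (card (fst s))}"
  let ?S0 = "Sadv adj A1 v"
  let ?Ss = "Sset adj A1 j"
  have vA: "v \<in> A j" using Cons.prems(3) by simp
  have vlt: "\<forall>x\<in>set vs. v < x" using Cons.prems(1,2) by (auto simp: order_le_less)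
  have P: "{u \<in> A j. u < v} = A j - set (v # vs)"
  proof
    show "{u \<in> A j. u < v} \<subseteq> A j - set (v # vs)" using vlt by auto
    show "A j - set (v # vs) \<subseteq> {u \<in> A j. u < v}" using Cons.prems(4) by auto
  qed
  have aw: "fst st = U j \<union> Scum adj A1 j v"
    unfolding Scum_formula P using Cons.prems(5) .
  have sadv: "?S0 = Sv adj A1 j v" using Sadv_actor[OF j vA] .
  have nb: "nbrs adj v \<subseteq> U j \<union> ?Ss" using nbrs_actor[OF j vA] .
  have sc: "Scum adj A1 j v \<subseteq> ?Ss" unfolding Scum_formula by blast
  have "fst st \<subseteq> {1..n}" using aw U_sub[of j] sc Sset_eq[OF j] A_sub[of "Suc j"] by blast
  then have fin: "finite (fst st)" using finite_subset by blast
  have dj: "U j \<inter> ?Ss = {}" using U_disj[of j] Sset_eq[OF j] by blast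
  have S0dis: "?S0 \<inter> fst st = {}" unfolding sadv Sv_def aw using dj by blast
  have S0sub: "?S0 \<subseteq> ?Ss - fst st" using S0dis unfolding sadv Sv_def by blast
  have finS0: "finite ?S0" using Sadv_sub_nbrs nbrs_fin finite_subset by blast
  have finSs: "finite ?Ss" using Sset_eq[OF j] A_fin by simp
  have act: "1 - \<epsilon> * (1 + real (card ?S0)) \<le> measure_pmf.prob (act Q n adj port A1 \<alpha> v (fst st))
     {(aw', m). aw' = fst st \<union> ?S0 \<and> (v \<in> B0 n adj A1 \<alpha> \<longrightarrow> real m \<le> Cst * real (card ?S0))}"
    using act_good[OF j vA aw] .
  have unf: "run_actors Q n adj port A1 \<alpha> (v # vs) st = bind_pmf (act Q n adj port A1 \<alpha> v (fst st)) (\<lambda>(aw', m).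
       run_actors Q n adj port A1 \<alpha> vs (aw', snd st + (if v \<in> B0 n adj A1 \<alpha> then m else 0)))"
    by simp
  have cardSs: "card (?Ss - fst st) = card (?Ss - (fst st \<union> ?S0)) + card ?S0"
  proof -
    have "?Ss - fst st = (?Ss - (fst st \<union> ?S0)) \<union> ?S0" using S0sub by blast
    moreover have "(?Ss - (fst st \<union> ?S0)) \<inter> ?S0 = {}" by blast
    moreover have "finite (?Ss - (fst st \<union> ?S0))" using finSs by simp
    ultimately show ?thesis using finS0 by (simp only: card_Un_disjoint)
  qed
  have main: "1 - (\<epsilon> * (1 + real (card ?S0)) + \<epsilon> * (real (length vs) + real (card (?Ss - (fst st \<union> ?S0)))))
     \<le> measure_pmf.prob (run_actors Q n adj port A1 \<alpha> (v # vs) st) ?G"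
    unfolding unf
  proof (rule prob_bind_ge[OF act])
    show "0 \<le> \<epsilon> * (1 + real (card ?S0))" using eps0 by simp
    show "0 \<le> \<epsilon> * (real (length vs) + real (card (?Ss - (fst st \<union> ?S0))))" using eps0 by simp
    fix x assume x: "x \<in> {(aw', m). aw' = fst st \<union> ?S0 \<and> (v \<in> B0 n adj A1 \<alpha> \<longrightarrow> real m \<le> Cst * real (card ?S0))}"
    then obtain m where xm: "x = (fst st \<union> ?S0, m)" and mb: "v \<in> B0 n adj A1 \<alpha> \<longrightarrow> real m \<le> Cst * real (card ?S0)"
      by auto
    define st' where "st' = (fst st \<union> ?S0, snd st + (if v \<in> B0 n adj A1 \<alpha> then m else 0))"
    have "1 - \<epsilon> * (real (length vs) + real (card (?Ss - fst st'))) \<le> measure_pmf.prob (run_actors Q n adj port A1 \<alpha> vs st') ?G"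
    proof (rule Cons.IH)
      show "sorted vs" using Cons.prems(1) by simp
      show "distinct vs" using Cons.prems(2) by simp
      show "set vs \<subseteq> A j" using Cons.prems(3) by simp
      show "\<forall>u\<in>A j - set vs. \<forall>x\<in>set vs. u < x" using Cons.prems(4) vlt by auto
      have ins: "A j - set vs = insert v (A j - set (v # vs))" using vA Cons.prems(2) by auto
      show "fst st' = U j \<union> ((\<Union>u\<in>A j - set vs. nbrs adj u) \<inter> ?Ss)"
        unfolding st'_def fst_conv ins using Cons.prems(5) unfolding sadv Sv_def aw
        by (auto simp: Scum_formula P)
      have "card (fst st \<union> ?S0) = card (fst st) + card ?S0"
        by (rule card_Un_disjoint[OF fin finS0]) (use S0dis in blast)
      then have "real (card (fst st')) = real (card (fst st)) + real (card ?S0)"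
        unfolding st'_def by simp
      moreover have "real (snd st') \<le> real (snd st) + Cst * real (card ?S0)"
        unfolding st'_def using mb Cst_nonneg by auto
      ultimately show "real (snd st') \<le> Cst * real (card (fst st'))"
        using Cons.prems(6) by (simp add: algebra_simps)
    qed
    then show "1 - \<epsilon> * (real (length vs) + real (card (?Ss - (fst st \<union> ?S0)))) \<le> measure_pmf.prob
      ((\<lambda>(aw', m). run_actors Q n adj port A1 \<alpha> vs (aw', snd st + (if v \<in> B0 n adj A1 \<alpha> then m else 0))) x) ?G"
      unfolding xm st'_def by simp
  qed
  have e: "1 - \<epsilon> * (real (length (v # vs)) + real (card (?Ss - fst st))) =
     1 - (\<epsilon> * (1 + real (card ?S0)) + \<epsilon> * (real (length vs) + real (card (?Ss - (fst st \<union> ?S0)))))"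
    using cardSs by (simp add: algebra_simps)
  show ?case unfolding e by (rule main)
qed

lemma epochs_good:
  "1 \<le> j \<Longrightarrow> fst st = U j \<Longrightarrow> real (snd st) \<le> Cst * real (card (fst st)) \<Longrightarrow>
   1 - \<epsilon> * (real (card (A j)) + 2 * (real n - real (card (U j)))) \<le>
     measure_pmf.prob (epochs Q n adj port A1 \<alpha> k (A j) st) {s. real (snd s) \<le> Cst * real n}"
proof (induction k arbitrary: j st)
  case 0
  have cU: "card (U j) \<le> n" using card_mono[OF _ U_sub[of j]] by simp
  then have "real (card (fst st)) \<le> real n" using 0 by simp
  then have "real (snd st) \<le> Cst * real n"
    using 0(3) Cst_nonneg by (meson mult_left_mono order_trans)
  moreover have "0 \<le> \<epsilon> * (real (card (A j)) + 2 * (real n - real (card (U j))))"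
    using eps0 cU by simp
  ultimately show ?case by simp
next
  case (Suc k)
  let ?G = "{s. real (snd s) \<le> Cst * real n}"
  let ?vs = "sorted_list_of_set (A j)"
  have j: "1 \<le> j" by fact
  have SA: "Sset adj A1 j = A (Suc j)" using Sset_eq[OF j] .
  have ra: "1 - \<epsilon> * (real (length ?vs) + real (card (Sset adj A1 j - fst st))) \<le>
      measure_pmf.prob (run_actors Q n adj port A1 \<alpha> ?vs st)
        {s. fst s = U j \<union> Sset adj A1 j \<and> real (snd s) \<le> Cst * real (card (fst s))}"
  proof (rule run_good[OF j])
    show "sorted ?vs" "distinct ?vs" by simp_all
    show "set ?vs \<subseteq> A j" using A_fin by simp
    show "\<forall>u\<in>A j - set ?vs. \<forall>x\<in>set ?vs. u < x" using A_fin by simp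
    show "fst st = U j \<union> ((\<Union>u\<in>A j - set ?vs. nbrs adj u) \<inter> Sset adj A1 j)" using A_fin Suc.prems(2) by simp
    show "real (snd st) \<le> Cst * real (card (fst st))" by fact
  qed
  have len: "length ?vs = card (A j)" by simp
  have d1: "Sset adj A1 j - fst st = A (Suc j)" using SA U_disj[of j] Suc.prems(2) by blast
  have cU: "card (U (Suc j)) = card (U j) + card (A (Suc j))"
    using U_Suc[of j] U_disj[of j] U_fin A_fin by (simp add: card_Un_disjoint Int_commute)
  have main: "1 - (\<epsilon> * (real (card (A j)) + real (card (A (Suc j)))) +
       \<epsilon> * (real (card (A (Suc j))) + 2 * (real n - real (card (U (Suc j))))))
      \<le> measure_pmf.prob (epochs Q n adj port A1 \<alpha> (Suc k) (A j) st) ?G"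
    unfolding epochs.simps
  proof (rule prob_bind_ge)
    show "1 - \<epsilon> * (real (card (A j)) + real (card (A (Suc j)))) \<le>
      measure_pmf.prob (run_actors Q n adj port A1 \<alpha> ?vs st)
        {s. fst s = U j \<union> Sset adj A1 j \<and> real (snd s) \<le> Cst * real (card (fst s))}"
      using ra len d1 by simp
    show "0 \<le> \<epsilon> * (real (card (A j)) + real (card (A (Suc j))))" using eps0 by simp
    have "card (U (Suc j)) \<le> n" using card_mono[OF _ U_sub[of "Suc j"]] by simp
    then show "0 \<le> \<epsilon> * (real (card (A (Suc j))) + 2 * (real n - real (card (U (Suc j)))))" using eps0 by simp
    fix st' assume st': "st' \<in> {s. fst s = U j \<union> Sset adj A1 j \<and> real (snd s) \<le> Cst * real (card (fst s))}"
    have f1: "fst st' = U (Suc j)" using st' SA U_Suc[of j] by simp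
    have f2: "fst st' - fst st = A (Suc j)" using f1 U_Suc[of j] U_disj[of j] Suc.prems(2) by blast
    show "1 - \<epsilon> * (real (card (A (Suc j))) + 2 * (real n - real (card (U (Suc j))))) \<le>
      measure_pmf.prob (epochs Q n adj port A1 \<alpha> k (fst st' - fst st) st') ?G"
    proof -
      have c': "real (snd st') \<le> Cst * real (card (fst st'))" using st' by blast
      show ?thesis unfolding f2 by (rule Suc.IH[of "Suc j" st']) (use f1 c' in auto)
    qed
  qed
  have e: "1 - \<epsilon> * (real (card (A j)) + 2 * (real n - real (card (U j)))) =
     1 - (\<epsilon> * (real (card (A j)) + real (card (A (Suc j)))) +
       \<epsilon> * (real (card (A (Suc j))) + 2 * (real n - real (card (U (Suc j))))))"
    using cU by (simp add: algebra_simps)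
  show ?case unfolding e by (rule main)
qed

end




lemma final_cost:
  fixes n b :: nat and K0 :: real
  assumes n2: "2 \<le> n" and bn: "2 ^ b \<le> n" and K0: "0 \<le> K0"
  shows "(K0 * ln (real n) * sqrt (2 * real n / 2 ^ b) + 2) * real n
     \<le> (sqrt 2 * K0 + 2 / ln 2) * sqrt (real n ^ 3 / 2 ^ b) * ln (real n)"
proof -
  define s where "s = sqrt (real n ^ 3 / 2 ^ b)"
  have np: "0 < real n" using n2 by simp
  have bp: "(0::real) < 2 ^ b" by simp
  have h1: "sqrt (2 * real n / 2 ^ b) * real n = sqrt 2 * s"
  proof -
    have "sqrt (2 * real n / 2 ^ b) * real n = sqrt (2 * real n / 2 ^ b) * sqrt (real n ^ 2)"
      using np by simp
    also have "\<dots> = sqrt (2 * real n / 2 ^ b * real n ^ 2)" by (simp only: real_sqrt_mult)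
    also have "\<dots> = sqrt (2 * (real n ^ 3 / 2 ^ b))"
      by (rule arg_cong[where f=sqrt]) (simp add: field_simps power2_eq_square power3_eq_cube)
    also have "\<dots> = sqrt 2 * s" unfolding s_def by (simp only: real_sqrt_mult)
    finally show ?thesis .
  qed
  have h2: "real n \<le> s"
  proof -
    have "real (2 ^ b) \<le> real n" using bn by (simp only: of_nat_le_iff)
    then have "(2::real) ^ b \<le> real n" by simp
    then have "real n ^ 2 * 2 ^ b \<le> real n ^ 2 * real n" by (intro mult_left_mono) auto
    then have "real n ^ 2 \<le> real n ^ 3 / 2 ^ b" using bp
      by (simp add: pos_le_divide_eq power2_eq_square power3_eq_cube)
    then have "sqrt (real n ^ 2) \<le> s" unfolding s_def by (rule real_sqrt_le_mono)
    then show ?thesis using np by simp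
  qed
  have l2: "0 < ln (2::real)" by simp
  have h3: "ln 2 \<le> ln (real n)" using n2 by simp
  have h4: "2 * real n \<le> 2 / ln 2 * s * ln (real n)"
  proof -
    have "2 / ln 2 * real n * ln 2 \<le> 2 / ln 2 * s * ln (real n)"
      using h2 h3 l2 np by (intro mult_mono) auto
    then show ?thesis using l2 by simp
  qed
  have "(K0 * ln (real n) * sqrt (2 * real n / 2 ^ b) + 2) * real n
      = K0 * ln (real n) * (sqrt (2 * real n / 2 ^ b) * real n) + 2 * real n"
    by (simp add: algebra_simps)
  also have "\<dots> = sqrt 2 * K0 * s * ln (real n) + 2 * real n" unfolding h1 by (simp add: algebra_simps)
  also have "\<dots> \<le> sqrt 2 * K0 * s * ln (real n) + 2 / ln 2 * s * ln (real n)" using h4 by simp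
  also have "\<dots> = (sqrt 2 * K0 + 2 / ln 2) * s * ln (real n)" by (simp add: algebra_simps)
  finally show ?thesis unfolding s_def .
qed

lemma final_err:
  fixes n a :: nat and c :: real
  assumes n2: "2 \<le> n" and an: "a \<le> n" and c: "0 < c"
  shows "1 - 1 / real n powr c \<le> 1 - 1 / real n powr (c + 2) * (real a + 2 * (real n - real a))"
proof -
  have np: "0 < real n" using n2 by simp
  have pc: "0 < real n powr c" using np by simp
  have e1: "real n powr (c + 2) = real n powr c * (real n * real n)"
    using np by (simp add: powr_add power2_eq_square)
  have "real a + 2 * (real n - real a) \<le> 2 * real n" by simp
  then have "1 / real n powr (c + 2) * (real a + 2 * (real n - real a)) \<le> 1 / real n powr (c + 2) * (2 * real n)"
    using np by (intro mult_left_mono) auto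
  also have "\<dots> = (2 / real n) * (1 / real n powr c)" unfolding e1 using np pc by (simp add: field_simps)
  also have "\<dots> \<le> 1 * (1 / real n powr c)"
    using n2 pc by (intro mult_right_mono) auto
  finally show ?thesis by simp
qed

theorem lemma7:
  fixes c :: real
  assumes "c > 0"
  shows "\<exists>d::real. \<forall>(Q::qsearch) (K0::real). qsearch_spec Q K0 d \<longrightarrow>
     (\<exists>K::real. \<forall>n adj port A1 (\<alpha>::nat).
        wakeup_instance n adj port A1 \<and> 2 ^ beta \<alpha> \<le> n \<longrightarrow>
        measure_pmf.prob (B0_cost Q n adj port A1 \<alpha>)
          {x. real x \<le> K * sqrt (real n ^ 3 / 2 ^ beta \<alpha>) * ln (real n)}
        \<ge> 1 - 1 / real n powr c)"
proof (rule exI[of _ "c + 2"], intro allI impI)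
  fix Q :: qsearch and K0 :: real
  assume spec: "qsearch_spec Q K0 (c + 2)"
  show "\<exists>K::real. \<forall>n adj port A1 (\<alpha>::nat).
        wakeup_instance n adj port A1 \<and> 2 ^ beta \<alpha> \<le> n \<longrightarrow>
        measure_pmf.prob (B0_cost Q n adj port A1 \<alpha>)
          {x. real x \<le> K * sqrt (real n ^ 3 / 2 ^ beta \<alpha>) * ln (real n)}
        \<ge> 1 - 1 / real n powr c"
  proof (rule exI[of _ "sqrt 2 * \<bar>K0\<bar> + 2 / ln 2"], intro allI impI)
    fix n adj port A1 \<alpha>
    assume H: "wakeup_instance n adj port A1 \<and> 2 ^ beta \<alpha> \<le> n"
    let ?K = "sqrt 2 * \<bar>K0\<bar> + 2 / ln 2"
    let ?X = "{x. real x \<le> ?K * sqrt (real n ^ 3 / 2 ^ beta \<alpha>) * ln (real n)}"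
    interpret WI n adj port A1 using H by (simp add: WI_def)
    show "1 - 1 / real n powr c \<le> measure_pmf.prob (B0_cost Q n adj port A1 \<alpha>) ?X"
    proof (cases "n = 1")
      case True
      then show ?thesis by simp
    next
      case False
      then have n2: "2 \<le> n" using n_ge1 by simp
      define \<epsilon> where "\<epsilon> = 1 / real n powr (c + 2)"
      interpret ALG n adj port A1 Q "\<bar>K0\<bar>" \<alpha> \<epsilon>
      proof
        fix X T :: "nat set" assume X: "finite X" "T \<subseteq> X"
        have "1 - \<epsilon> \<le> measure_pmf.prob (Q n X T)
           {(F, m). F = T \<and> real m \<le> K0 * sqrt (real (card X) * real (max (card T) 1)) * ln (real n)}"
          using spec X unfolding qsearch_spec_def \<epsilon>_def by blast
        also have "\<dots> \<le> measure_pmf.prob (Q n X T) (succ_set n \<bar>K0\<bar> X T)"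
        proof (rule measure_pmf.finite_measure_mono)
          have "K0 * sqrt (real (card X) * real (max (card T) 1)) * ln (real n)
              \<le> \<bar>K0\<bar> * sqrt (real (card X) * real (max (card T) 1)) * ln (real n)" for X T
          proof -
            have "0 \<le> sqrt (real (card X) * real (max (card T) 1)) * ln (real n)" using n_ge1 by simp
            then have "K0 * (sqrt (real (card X) * real (max (card T) 1)) * ln (real n))
              \<le> \<bar>K0\<bar> * (sqrt (real (card X) * real (max (card T) 1)) * ln (real n))"
              by (intro mult_right_mono) auto
            then show ?thesis by (simp add: mult.assoc)
          qed
          then show "{(F, m). F = T \<and> real m \<le> K0 * sqrt (real (card X) * real (max (card T) 1)) * ln (real n)}
              \<subseteq> succ_set n \<bar>K0\<bar> X T"
            unfolding succ_set_def by (auto intro: order_trans)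
        qed simp
        finally show "1 - \<epsilon> \<le> measure_pmf.prob (Q n X T) (succ_set n \<bar>K0\<bar> X T)" .
      next
        show "0 \<le> \<epsilon>" unfolding \<epsilon>_def by simp
        show "0 \<le> \<bar>K0\<bar>" by simp
        show "2 ^ beta \<alpha> \<le> n" using H by simp
      qed
      have A1eq: "A 1 = A1" by simp
      have U1: "U 1 = A1" unfolding Ul_def by (auto simp: atMost_Suc)
      have eg: "1 - \<epsilon> * (real (card (A 1)) + 2 * (real n - real (card (U 1)))) \<le>
          measure_pmf.prob (epochs Q n adj port A1 \<alpha> (n + 1) (A 1) (A1, 0)) {s. real (snd s) \<le> Cst * real n}"
        by (rule epochs_good) (use U1 Cst_nonneg in auto)
      have cA: "card A1 \<le> n" using card_mono[OF _ A1_sub] by simp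
      have "1 - 1 / real n powr c \<le> 1 - \<epsilon> * (real (card A1) + 2 * (real n - real (card A1)))"
        unfolding \<epsilon>_def by (rule final_err[OF n2 cA assms])
      also have "\<dots> \<le> measure_pmf.prob (epochs Q n adj port A1 \<alpha> (n + 1) A1 (A1, 0)) {s. real (snd s) \<le> Cst * real n}"
        using eg A1eq U1 by simp
      also have "\<dots> \<le> measure_pmf.prob (epochs Q n adj port A1 \<alpha> (n + 1) A1 (A1, 0)) (snd -` ?X)"
      proof (rule measure_pmf.finite_measure_mono)
        have "Cst * real n \<le> ?K * sqrt (real n ^ 3 / 2 ^ beta \<alpha>) * ln (real n)"
          unfolding Cst_def using final_cost[OF n2 bn, of "\<bar>K0\<bar>"] by simp
        then show "{s. real (snd s) \<le> Cst * real n} \<subseteq> snd -` ?X" by auto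
      qed simp
      also have "\<dots> = measure_pmf.prob (B0_cost Q n adj port A1 \<alpha>) ?X"
        unfolding B0_cost_def by simp
      finally show ?thesis .
    qed
  qed
qed


end
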